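(* As $\mu\to0$ and $|\mathcal{S}|\mu\to\eta\in[0,\infty)$, $$\big(M_x^{\mu,\mathcal{S}}\big)_{x\in\mathcal{T}\setminus\{\emptyset\}}\longrightarrow(M_x)_{x\in\mathcal{T}\setminus\{\emptyset\}}$$ in distribution (i.e. all finite-dimensional marginals converge), where the $M_x$ are i.i.d. Poisson$(\eta)$.
   Context: $\mathcal{T}=\bigcup_{l\ge0}\{0,1\}^l$ (binary words; $\emptyset$ the initial cell; $x\prec y$ iff $x$ is a proper prefix of $y$; $x0,x1$ the daughters of $x$). Genomes: $\mathcal{N}=\{A,C,G,T\}$, $\mathcal{S}$ a finite set of sites, $V^\mu(\emptyset)=u$, and given $V^\mu(x)=v$ the entries $V_i^\mu(xj)$ ($i\in\mathcal{S}$, $j\in\{0,1\}$) are independent with $\mathbb{P}[V_i^\mu(xj)=\psi]=\mu/3$ for $\psi\ne v_i$, $1-\mu$ for $\psi=v_i$, independently across divisions. Fix an enumeration $\mathcal{T}=(x_k)_{k\in\mathbb{N}}$ with $x_j\prec x_k\Rightarrow j<k$; $\phi_i^\mu$ is the first cell in the enumeration with $V_i^\mu(x)\ne u_i$; $M_x^{\mu,\mathcal{S}}=|\{i\in\mathcal{S}:\phi_i^\mu=x\}|$. *)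

theory Defs
  imports "HOL-Probability.Probability" "HOL-Library.Sublist"
begin

datatype nucleotide = A | C | G | T

text \<open>Cells are binary words (bool lists); the daughters of x are x @ [False], x @ [True];
  the mother of a non-root cell x is butlast x.\<close>

definition trans_prob :: "real \<Rightarrow> nucleotide \<Rightarrow> nucleotide \<Rightarrow> real" where
  "trans_prob \<mu> a b = (if a = b then 1 - \<mu> else \<mu> / 3)"

definition prefix_closed :: "bool list set \<Rightarrow> bool" where
  "prefix_closed F \<longleftrightarrow> (\<forall>x\<in>F. \<forall>y. prefix y x \<longrightarrow> y \<in> F)"

definition genome_process ::
  "'w measure \<Rightarrow> real \<Rightarrow> 's set \<Rightarrow> ('s \<Rightarrow> nucleotide)
     \<Rightarrow> (bool list \<Rightarrow> 'w \<Rightarrow> 's \<Rightarrow> nucleotide) \<Rightarrow> bool" where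
  "genome_process M \<mu> S u V \<longleftrightarrow>
     prob_space M \<and>
     (\<forall>x. \<forall>i\<in>S. (\<lambda>\<omega>. V x \<omega> i) \<in> measurable M (count_space UNIV)) \<and>
     (\<forall>F w. finite F \<and> [] \<in> F \<and> prefix_closed F \<longrightarrow>
        measure M {\<omega>\<in>space M. \<forall>x\<in>F. \<forall>i\<in>S. V x \<omega> i = w x i} =
          (if \<forall>i\<in>S. w [] i = u i then 1 else 0) *
          (\<Prod>x\<in>F - {[]}. \<Prod>i\<in>S. trans_prob \<mu> (w (butlast x) i) (w x i)))"

definition admissible_enum :: "(nat \<Rightarrow> bool list) \<Rightarrow> bool" where
  "admissible_enum e \<longleftrightarrow> bij e \<and> (\<forall>j k. strict_prefix (e j) (e k) \<longrightarrow> j < k)"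

definition first_mut ::
  "(nat \<Rightarrow> bool list) \<Rightarrow> (bool list \<Rightarrow> 'w \<Rightarrow> 's \<Rightarrow> nucleotide) \<Rightarrow> ('s \<Rightarrow> nucleotide)
     \<Rightarrow> 's \<Rightarrow> bool list \<Rightarrow> 'w \<Rightarrow> bool" where
  "first_mut e V u i x \<omega> \<longleftrightarrow>
     (\<exists>k. e k = x \<and> V x \<omega> i \<noteq> u i \<and> (\<forall>j<k. V (e j) \<omega> i = u i))"

definition mut_count ::
  "(nat \<Rightarrow> bool list) \<Rightarrow> 's set \<Rightarrow> (bool list \<Rightarrow> 'w \<Rightarrow> 's \<Rightarrow> nucleotide) \<Rightarrow> ('s \<Rightarrow> nucleotide)
     \<Rightarrow> bool list \<Rightarrow> 'w \<Rightarrow> nat" where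
  "mut_count e S V u x \<omega> = card {i\<in>S. first_mut e V u i x \<omega>}"

definition poisson_prob :: "real \<Rightarrow> nat \<Rightarrow> real" where
  "poisson_prob \<eta> k = exp (- \<eta>) * \<eta> ^ k / fact k"

end

theory Submission
  imports Defs
begin


lemma sum_PiE_insert:
  assumes "x \<notin> S"
  shows "(\<Sum>g\<in>PiE (insert x S) TT. f g) = (\<Sum>y\<in>TT x. \<Sum>g\<in>PiE S TT. f (g(x:=y)))"
proof -
  have "(\<Sum>g\<in>PiE (insert x S) TT. f g) = (\<Sum>p\<in>TT x \<times> PiE S TT. f ((\<lambda>(y, g). g(x := y)) p))"
    unfolding PiE_insert_eq by (subst sum.reindex[OF inj_combinator[OF assms]]) (simp add: case_prod_beta)
  also have "\<dots> = (\<Sum>y\<in>TT x. \<Sum>g\<in>PiE S TT. f (g(x:=y)))"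
    by (simp add: sum.cartesian_product case_prod_unfold)
  finally show ?thesis .
qed

lemma UNIV_nucleotide: "(UNIV :: nucleotide set) = {A, C, G, T}"
  using nucleotide.exhaust by auto

instance nucleotide :: finite
  by standard (simp add: UNIV_nucleotide)

lemma sum_trans: "(\<Sum>v\<in>UNIV. trans_prob \<mu> a v) = 1"
  unfolding UNIV_nucleotide by (cases a) (simp_all add: trans_prob_def)

lemma sum_trans_ne: "(\<Sum>v\<in>UNIV. if v \<noteq> a then trans_prob \<mu> a v else 0) = \<mu>"
  unfolding UNIV_nucleotide by (cases a) (simp_all add: trans_prob_def)


definition cfg :: "nat \<Rightarrow> (nat \<Rightarrow> nucleotide) set" where
  "cfg K = PiE {..K} (\<lambda>_. UNIV)"

definition wt :: "real \<Rightarrow> (nat \<Rightarrow> nat) \<Rightarrow> nat \<Rightarrow> (nat \<Rightarrow> nucleotide) \<Rightarrow> real" where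
  "wt \<mu> par K a = (\<Prod>j\<in>{1..K}. trans_prob \<mu> (a (par j)) (a j))"

lemma finite_cfg[simp]: "finite (cfg K)"
  unfolding cfg_def by (rule finite_PiE) auto

lemma cfg_Suc: "cfg (Suc K) = (\<lambda>(y, g). g(Suc K := y)) ` (UNIV \<times> cfg K)"
  unfolding cfg_def atMost_Suc by (rule PiE_insert_eq)

lemma sum_cfg_Suc: "(\<Sum>a\<in>cfg (Suc K). f a) = (\<Sum>y\<in>UNIV. \<Sum>g\<in>cfg K. f (g(Suc K:=y)))"
  unfolding cfg_def atMost_Suc by (rule sum_PiE_insert) simp

lemma leaf:
  assumes par: "\<And>j. 1 \<le> j \<Longrightarrow> par j < j"
    and kK: "k \<le> K"
    and R: "\<And>a a'. (\<And>j. j \<le> k \<Longrightarrow> a j = a' j) \<Longrightarrow> R a = R a'"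
  shows "(\<Sum>a\<in>cfg K. R a * wt \<mu> par K a) = (\<Sum>a\<in>cfg k. R a * wt \<mu> par k a)"
  using kK
proof (induction K)
  case 0
  then show ?case by simp
next
  case (Suc K)
  show ?case
  proof (cases "k = Suc K")
    case True then show ?thesis by simp
  next
    case False
    then have kK: "k \<le> K" using Suc.prems by simp
    have "(\<Sum>a\<in>cfg (Suc K). R a * wt \<mu> par (Suc K) a)
      = (\<Sum>y\<in>UNIV. \<Sum>g\<in>cfg K. R (g(Suc K:=y)) * wt \<mu> par (Suc K) (g(Suc K:=y)))"
      by (rule sum_cfg_Suc)
    also have "\<dots> = (\<Sum>y\<in>UNIV. \<Sum>g\<in>cfg K. R g * wt \<mu> par K g * trans_prob \<mu> (g (par (Suc K))) y)"
    proof (intro sum.cong refl)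
      fix y g
      have "R (g(Suc K:=y)) = R g" using kK by (intro R) auto
      moreover have "wt \<mu> par (Suc K) (g(Suc K:=y)) = wt \<mu> par K g * trans_prob \<mu> (g (par (Suc K))) y"
      proof -
        have "{1..Suc K} = insert (Suc K) {1..K}" by auto
        moreover have "(\<Prod>j\<in>{1..K}. trans_prob \<mu> ((g(Suc K:=y)) (par j)) ((g(Suc K:=y)) j))
            = (\<Prod>j\<in>{1..K}. trans_prob \<mu> (g (par j)) (g j))"
        proof (intro prod.cong refl)
          fix j assume "j \<in> {1..K}"
          then have "par j \<noteq> Suc K" "j \<noteq> Suc K" using par[of j] by auto
          then show "trans_prob \<mu> ((g(Suc K:=y)) (par j)) ((g(Suc K:=y)) j) = trans_prob \<mu> (g (par j)) (g j)" by simp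
        qed
        moreover have "par (Suc K) \<noteq> Suc K" using par[of "Suc K"] by simp
        ultimately show ?thesis unfolding wt_def by (simp add: mult.commute)
      qed
      ultimately show "R (g(Suc K:=y)) * wt \<mu> par (Suc K) (g(Suc K:=y)) =
         R g * wt \<mu> par K g * trans_prob \<mu> (g (par (Suc K))) y" by simp
    qed
    also have "\<dots> = (\<Sum>g\<in>cfg K. R g * wt \<mu> par K g * (\<Sum>y\<in>UNIV. trans_prob \<mu> (g (par (Suc K))) y))"
      by (subst sum.swap) (simp add: sum_distrib_left)
    also have "\<dots> = (\<Sum>g\<in>cfg K. R g * wt \<mu> par K g)" by (simp add: sum_trans)
    also have "\<dots> = (\<Sum>a\<in>cfg k. R a * wt \<mu> par k a)" using Suc.IH[OF kK] .
    finally show ?thesis .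
  qed
qed

lemma wt_upd:
  assumes par: "\<And>j. 1 \<le> j \<Longrightarrow> par j < j"
  shows "wt \<mu> par (Suc K) (g(Suc K:=y)) = wt \<mu> par K g * trans_prob \<mu> (g (par (Suc K))) y"
proof -
  have "{1..Suc K} = insert (Suc K) {1..K}" by auto
  moreover have "(\<Prod>j\<in>{1..K}. trans_prob \<mu> ((g(Suc K:=y)) (par j)) ((g(Suc K:=y)) j))
      = (\<Prod>j\<in>{1..K}. trans_prob \<mu> (g (par j)) (g j))"
  proof (intro prod.cong refl)
    fix j assume "j \<in> {1..K}"
    then have "par j \<noteq> Suc K" "j \<noteq> Suc K" using par[of j] by auto
    then show "trans_prob \<mu> ((g(Suc K:=y)) (par j)) ((g(Suc K:=y)) j) = trans_prob \<mu> (g (par j)) (g j)" by simp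
  qed
  moreover have "par (Suc K) \<noteq> Suc K" using par[of "Suc K"] by simp
  ultimately show ?thesis unfolding wt_def by (simp add: mult.commute)
qed

lemma sum_cfg_0: "(\<Sum>a\<in>cfg 0. f a) = (\<Sum>y\<in>UNIV. f ((\<lambda>_. undefined)(0:=y)))"
proof -
  have "cfg 0 = PiE (insert 0 {}) (\<lambda>_. UNIV)" unfolding cfg_def by auto
  then show ?thesis by (simp add: sum_PiE_insert fun_upd_def)
qed

definition qw :: "real \<Rightarrow> (nat \<Rightarrow> nat) \<Rightarrow> nat \<Rightarrow> nucleotide \<Rightarrow> (nat \<Rightarrow> nucleotide) \<Rightarrow> real" where
  "qw \<mu> par K b a = (if a 0 = b then 1 else 0) * wt \<mu> par K a"

definition hit :: "nucleotide \<Rightarrow> (nat \<Rightarrow> nucleotide) \<Rightarrow> nat \<Rightarrow> bool" where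
  "hit b a k \<longleftrightarrow> a k \<noteq> b \<and> (\<forall>j<k. a j = b)"

lemma total_qw:
  assumes par: "\<And>j. 1 \<le> j \<Longrightarrow> par j < j"
  shows "(\<Sum>a\<in>cfg K. qw \<mu> par K b a) = 1"
proof -
  have "(\<Sum>a\<in>cfg K. qw \<mu> par K b a) = (\<Sum>a\<in>cfg K. (if a 0 = b then 1 else 0) * wt \<mu> par K a)"
    unfolding qw_def ..
  also have "\<dots> = (\<Sum>a\<in>cfg 0. (if a 0 = b then 1 else 0) * wt \<mu> par 0 a)"
    by (rule leaf[OF par]) auto
  also have "\<dots> = 1" by (simp add: sum_cfg_0 wt_def)
  finally show ?thesis .
qed

lemma hit_prob:
  assumes par: "\<And>j. 1 \<le> j \<Longrightarrow> par j < j" and k: "1 \<le> k" "k \<le> K"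
  shows "(\<Sum>a\<in>cfg K. if hit b a k then qw \<mu> par K b a else 0) = \<mu> * (1 - \<mu>) ^ (k - 1)"
proof -
  obtain k0 where k0: "k = Suc k0" using k by (cases k) auto
  have "(\<Sum>a\<in>cfg K. if hit b a k then qw \<mu> par K b a else 0)
      = (\<Sum>a\<in>cfg K. (if a 0 = b \<and> hit b a k then 1 else 0) * wt \<mu> par K a)"
    unfolding qw_def by (intro sum.cong) auto
  also have "\<dots> = (\<Sum>a\<in>cfg k. (if a 0 = b \<and> hit b a k then 1 else 0) * wt \<mu> par k a)"
    by (rule leaf[OF par k(2)]) (auto simp: hit_def)
  also have "\<dots> = (\<Sum>y\<in>UNIV. \<Sum>g\<in>cfg k0. (if (\<forall>j\<le>k0. g j = b) then 1 else 0) * (if y \<noteq> b then 1 else 0)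
        * (wt \<mu> par k0 g * trans_prob \<mu> (g (par k)) y))"
    unfolding k0 sum_cfg_Suc
    by (intro sum.cong refl) (auto simp: hit_def less_Suc_eq_le wt_upd[OF par])
  also have "\<dots> = (\<Sum>y\<in>UNIV. \<Sum>g\<in>cfg k0. (if (\<forall>j\<le>k0. g j = b) then 1 else 0) * (if y \<noteq> b then 1 else 0)
        * (wt \<mu> par k0 g * trans_prob \<mu> b y))"
  proof (intro sum.cong refl)
    fix y g
    have "par k \<le> k0" using par[of k] k0 by simp
    then show "(if (\<forall>j\<le>k0. g j = b) then 1 else 0) * (if y \<noteq> b then 1 else 0)
        * (wt \<mu> par k0 g * trans_prob \<mu> (g (par k)) y) = (if (\<forall>j\<le>k0. g j = b) then 1 else 0) * (if y \<noteq> b then 1 else 0)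
        * (wt \<mu> par k0 g * trans_prob \<mu> b y)" by auto
  qed
  also have "\<dots> = (\<Sum>g\<in>cfg k0. \<Sum>y\<in>UNIV. (if (\<forall>j\<le>k0. g j = b) then 1 else 0) * wt \<mu> par k0 g *
       (if y \<noteq> b then trans_prob \<mu> b y else 0))"
    by (subst sum.swap) (auto intro!: sum.cong)
  also have "\<dots> = (\<Sum>g\<in>cfg k0. (if (\<forall>j\<le>k0. g j = b) then 1 else 0) * wt \<mu> par k0 g) *
       (\<Sum>y\<in>UNIV. if y \<noteq> b then trans_prob \<mu> b y else 0)"
    by (simp add: sum_distrib_right sum_distrib_left) (rule sum.swap)
  also have "(\<Sum>y\<in>UNIV. if y \<noteq> b then trans_prob \<mu> b y else 0) = \<mu>" by (rule sum_trans_ne)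
  also have "(\<Sum>g\<in>cfg k0. (if (\<forall>j\<le>k0. g j = b) then 1 else 0) * wt \<mu> par k0 g)
      = (\<Sum>g\<in>{g\<in>cfg k0. \<forall>j\<le>k0. g j = b}. wt \<mu> par k0 g)"
    by (simp add: sum.inter_filter) (intro sum.cong; auto)
  also have "{g\<in>cfg k0. \<forall>j\<le>k0. g j = b} = {restrict (\<lambda>_. b) {..k0}}"
    unfolding cfg_def by (auto simp: PiE_iff extensional_def restrict_def)
  also have "(\<Sum>g\<in>{restrict (\<lambda>_. b) {..k0}}. wt \<mu> par k0 g) = (1 - \<mu>) ^ k0"
  proof -
    have "wt \<mu> par k0 (restrict (\<lambda>_. b) {..k0}) = (\<Prod>j\<in>{1..k0}. trans_prob \<mu> b b)"
      unfolding wt_def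
    proof (intro prod.cong refl)
      fix j assume "j \<in> {1..k0}"
      then have "par j \<le> k0" using par[of j] by auto
      with \<open>j \<in> {1..k0}\<close> show "trans_prob \<mu> (restrict (\<lambda>_. b) {..k0} (par j)) (restrict (\<lambda>_. b) {..k0} j) = trans_prob \<mu> b b"
        by auto
    qed
    then show ?thesis by (simp add: trans_prob_def)
  qed
  finally show ?thesis using k0 by simp
qed



definition ff :: "nat \<Rightarrow> nat \<Rightarrow> real" where
  "ff N M = (\<Prod>t<M. (real N - real t))"

definition Qf :: "(nat \<Rightarrow> real) \<Rightarrow> real \<Rightarrow> nat set \<Rightarrow> nat \<Rightarrow> (nat \<Rightarrow> nat) \<Rightarrow> real" where
  "Qf p r0 J N m = ff N (\<Sum>j\<in>J. m j) / (\<Prod>j\<in>J. fact (m j)) * (\<Prod>j\<in>J. p j ^ m j) * r0 ^ (N - (\<Sum>j\<in>J. m j))"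

lemma ff_zero: "N < M \<Longrightarrow> ff N M = 0"
  unfolding ff_def by (rule prod_zero) (auto intro!: bexI[of _ N])

lemma ff_Suc: "ff N (Suc M) = ff N M * (real N - real M)"
  unfolding ff_def by simp

lemma ff_Suc_Suc: "ff (Suc N) (Suc M) = real (Suc N) * ff N M"
  unfolding ff_def by (subst prod.lessThan_Suc_shift) simp

lemma ff_0[simp]: "ff N 0 = 1" unfolding ff_def by simp

lemma qf_term:
  assumes J: "finite J" and j: "j \<in> J" and mj: "1 \<le> m j"
    and M: "(\<Sum>j\<in>J. m j) = Suc M'"
  shows "p j * Qf p r0 J N (m(j := m j - 1)) =
     real (m j) * (ff N M' / (\<Prod>j\<in>J. fact (m j)) * (\<Prod>j\<in>J. p j ^ m j) * r0 ^ (N - M'))"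
proof -
  define m' where "m' = m(j := m j - 1)"
  have s1: "(\<Sum>j\<in>J. m j) = m j + (\<Sum>i\<in>J-{j}. m i)" using J j by (simp add: sum.remove)
  have s2: "(\<Sum>j\<in>J. m' j) = m' j + (\<Sum>i\<in>J-{j}. m' i)" using J j by (simp add: sum.remove)
  have eqr: "\<And>f. (\<Sum>i\<in>J-{j}. f (m' i)) = (\<Sum>i\<in>J-{j}. f (m i))" "\<And>f. (\<Prod>i\<in>J-{j}. f i (m' i)) = (\<Prod>i\<in>J-{j}. f i (m i))"
    unfolding m'_def by (auto intro!: sum.cong prod.cong)
  have Msum: "(\<Sum>j\<in>J. m' j) = M'" using s1 s2 eqr(1)[of id] M mj unfolding m'_def by simp
  have d1: "(\<Prod>i\<in>J. fact (m i)) = fact (m j) * (\<Prod>i\<in>J-{j}. fact (m i) :: real)" using J j by (simp add: prod.remove)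
  have d2: "(\<Prod>i\<in>J. fact (m' i)) = fact (m j - 1) * (\<Prod>i\<in>J-{j}. fact (m i) :: real)"
    using J j eqr(2)[of "\<lambda>_ x. fact x"] by (simp add: prod.remove m'_def)
  have p1: "(\<Prod>i\<in>J. p i ^ m i) = p j ^ m j * (\<Prod>i\<in>J-{j}. p i ^ m i)" using J j by (simp add: prod.remove)
  have p2: "(\<Prod>i\<in>J. p i ^ m' i) = p j ^ (m j - 1) * (\<Prod>i\<in>J-{j}. p i ^ m i)"
    using J j eqr(2)[of "\<lambda>i x. p i ^ x"] by (simp add: prod.remove m'_def)
  obtain k where k: "m j = Suc k" using mj by (cases "m j") auto
  have fk: "(fact (m j) :: real) = real (m j) * fact k" using k by simp
  have "p j * Qf p r0 J N m' = p j * (ff N M' / (fact k * (\<Prod>i\<in>J-{j}. fact (m i))) * (p j ^ k * (\<Prod>i\<in>J-{j}. p i ^ m i)) * r0 ^ (N - M'))"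
    unfolding Qf_def Msum d2 p2 using k by simp
  also have "\<dots> = real (m j) * (ff N M' / (fact (m j) * (\<Prod>i\<in>J-{j}. fact (m i))) * (p j ^ m j * (\<Prod>i\<in>J-{j}. p i ^ m i)) * r0 ^ (N - M'))"
  proof -
    have "(\<Prod>i\<in>J-{j}. fact (m i) :: real) \<noteq> 0" using J by (simp add: prod_zero_iff)
    have aux: "\<And>x y z w. p j * (x / y * (p j ^ k * z) * w) = real (m j) * (x / (real (m j) * y) * (p j ^ m j * z) * w)"
    proof -
      fix x y z w
      have c: "real (m j) \<noteq> 0" using k by simp
      have "x / (real (m j) * y) = (x / y) / real (m j)" by simp
      then have "real (m j) * (x / (real (m j) * y) * (p j ^ m j * z) * w) = x / y * (p j ^ m j * z) * w"
        using c by simp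
      then show "p j * (x / y * (p j ^ k * z) * w) = real (m j) * (x / (real (m j) * y) * (p j ^ m j * z) * w)"
        using k by (simp add: ac_simps)
    qed
    show ?thesis unfolding fk mult.assoc[of "real (m j)" "fact k"] by (rule aux)
  qed
  finally show ?thesis unfolding m'_def d1 p1 .
qed

lemma qf_step:
  assumes J: "finite J"
  shows "r0 * Qf p r0 J N m + (\<Sum>j\<in>J. p j * (if 1 \<le> m j then Qf p r0 J N (m(j := m j - 1)) else 0))
     = Qf p r0 J (Suc N) m"
proof (cases "(\<Sum>j\<in>J. m j)")
  case 0
  then have z: "\<forall>j\<in>J. m j = 0" using J by simp
  then have "(\<Sum>j\<in>J. p j * (if 1 \<le> m j then Qf p r0 J N (m(j := m j - 1)) else 0)) = 0"
    by (intro sum.neutral) auto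
  moreover have "(\<Prod>j\<in>J. fact (m j) :: real) = 1" "(\<Prod>j\<in>J. p j ^ m j) = 1" using z by auto
  ultimately show ?thesis unfolding Qf_def 0 by simp
next
  case (Suc M')
  define D where "D = (\<Prod>j\<in>J. fact (m j) :: real)"
  define P where "P = (\<Prod>j\<in>J. p j ^ m j)"
  define X where "X = ff N M' / D * P * r0 ^ (N - M')"
  have "(\<Sum>j\<in>J. p j * (if 1 \<le> m j then Qf p r0 J N (m(j := m j - 1)) else 0)) = (\<Sum>j\<in>J. real (m j) * X)"
    using qf_term[OF J _ _ Suc] unfolding X_def D_def P_def by (intro sum.cong) auto
  also have "\<dots> = real (Suc M') * X" using Suc by (simp add: sum_distrib_right[symmetric] of_nat_sum[symmetric] del: of_nat_sum)
  finally have s: "(\<Sum>j\<in>J. p j * (if 1 \<le> m j then Qf p r0 J N (m(j := m j - 1)) else 0)) = real (Suc M') * X" .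
  show ?thesis
  proof (cases "M' \<le> N")
    case True
    have r: "r0 * Qf p r0 J N m = (real N - real M') * X"
    proof (cases "M' = N")
      case True
      then show ?thesis unfolding Qf_def Suc X_def ff_Suc by simp
    next
      case False
      then have e: "r0 * r0 ^ (N - Suc M') = r0 ^ (N - M')" using \<open>M' \<le> N\<close>
        by (metis Suc_diff_Suc le_neq_implies_less power_Suc)
      have "r0 * Qf p r0 J N m = ff N M' * (real N - real M') / D * P * (r0 * r0 ^ (N - Suc M'))"
        unfolding Qf_def Suc ff_Suc D_def[symmetric] P_def[symmetric] by (simp add: ac_simps)
      also have "\<dots> = (real N - real M') * X" unfolding e X_def by (simp add: ac_simps)
      finally show ?thesis .
    qed
    have q: "Qf p r0 J (Suc N) m = real (Suc N) * X"
      unfolding Qf_def Suc X_def ff_Suc_Suc D_def[symmetric] P_def[symmetric] by simp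
    show ?thesis unfolding r q s using True by (simp add: algebra_simps)
  next
    case False
    then have "ff N M' = 0" "ff N (Suc M') = 0" "ff (Suc N) (Suc M') = 0"
      using ff_zero by (auto simp: ff_Suc_Suc)
    then show ?thesis using s unfolding Qf_def Suc X_def by simp
  qed
qed



lemma hit_unique: "hit b a j1 \<Longrightarrow> hit b a j2 \<Longrightarrow> j1 = j2"
  unfolding hit_def by (metis linorder_neqE_nat)

lemma sum_hit_one:
  assumes "finite J" "j0 \<in> J" "hit b a j0"
  shows "(\<Sum>j\<in>J. if hit b a j then y j else 0) = y j0"
proof -
  have "(\<Sum>j\<in>J. if hit b a j then y j else 0) = (if hit b a j0 then y j0 else 0) + (\<Sum>j\<in>J-{j0}. if hit b a j then y j else 0)"
    using assms by (simp add: sum.remove)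
  also have "(\<Sum>j\<in>J-{j0}. if hit b a j then y j else 0) = 0"
    using hit_unique[OF assms(3)] by (intro sum.neutral) auto
  finally show ?thesis using assms by simp
qed

lemma sum_hit_none:
  assumes "\<not> (\<exists>j\<in>J. hit b a j)"
  shows "(\<Sum>j\<in>J. if hit b a j then y j else 0) = 0"
  using assms by (intro sum.neutral) auto

lemma site_step:
  fixes m :: "nat \<Rightarrow> nat" and F :: "(nat \<Rightarrow> nat) \<Rightarrow> real"
  assumes par: "\<And>j. 1 \<le> j \<Longrightarrow> par j < j" and JK: "J \<subseteq> {1..K}"
  shows "(\<Sum>a\<in>cfg K. qw \<mu> par K b a * (if \<forall>j\<in>J. (if j \<in> J \<and> hit b a j then 1 else 0) \<le> m j
            then F (\<lambda>j. m j - (if j \<in> J \<and> hit b a j then 1 else 0)) else 0))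
   = (1 - (\<Sum>j\<in>J. \<mu> * (1 - \<mu>) ^ (j - 1))) * F m
     + (\<Sum>j\<in>J. \<mu> * (1 - \<mu>) ^ (j - 1) * (if 1 \<le> m j then F (m(j := m j - 1)) else 0))"
proof -
  have J: "finite J" using JK finite_subset by blast
  define G where "G j = (if 1 \<le> m j then F (m(j := m j - 1)) else 0)" for j
  define q where "q a = qw \<mu> par K b a" for a
  have pw: "q a * (if \<forall>j\<in>J. (if j \<in> J \<and> hit b a j then 1 else 0) \<le> m j
            then F (\<lambda>j. m j - (if j \<in> J \<and> hit b a j then 1 else 0)) else 0)
     = (if \<exists>j\<in>J. hit b a j then 0 else q a) * F m + (\<Sum>j\<in>J. (if hit b a j then q a else 0) * G j)" for a
  proof (cases "\<exists>j\<in>J. hit b a j")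
    case True
    then obtain j0 where j0: "j0 \<in> J" "hit b a j0" by blast
    have u: "\<And>j. hit b a j \<Longrightarrow> j = j0" using hit_unique[OF j0(2)] by blast
    have s: "(\<Sum>j\<in>J. (if hit b a j then q a else 0) * G j) = q a * G j0"
    proof -
      have "(\<Sum>j\<in>J. (if hit b a j then q a else 0) * G j) = (\<Sum>j\<in>J. if hit b a j then q a * G j else 0)"
        by (intro sum.cong) auto
      then show ?thesis using sum_hit_one[OF J j0, of "\<lambda>j. q a * G j"] by simp
    qed
    have c: "(\<forall>j\<in>J. (if j \<in> J \<and> hit b a j then 1 else 0) \<le> m j) \<longleftrightarrow> 1 \<le> m j0"
      using j0 by (auto dest: u)
    have f: "(\<lambda>j. m j - (if j \<in> J \<and> hit b a j then 1 else 0)) = m(j0 := m j0 - 1)"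
      using j0 by (auto intro!: ext dest: u)
    show ?thesis using True by (simp only: c f s) (simp add: G_def)
  next
    case False
    have c: "(\<forall>j\<in>J. (if j \<in> J \<and> hit b a j then 1 else 0) \<le> m j) \<longleftrightarrow> True"
      using False by auto
    have f: "(\<lambda>j. m j - (if j \<in> J \<and> hit b a j then 1 else 0)) = m"
      using False by (auto intro!: ext)
    have s: "(\<Sum>j\<in>J. (if hit b a j then q a else 0) * G j) = 0"
      using False by (intro sum.neutral) auto
    show ?thesis using False by (simp only: c f s) simp
  qed
  have pw2: "q a = (if \<exists>j\<in>J. hit b a j then 0 else q a) + (\<Sum>j\<in>J. if hit b a j then q a else 0)" for a
  proof (cases "\<exists>j\<in>J. hit b a j")
    case True
    then obtain j0 where j0: "j0 \<in> J" "hit b a j0" by blast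
    show ?thesis using True sum_hit_one[OF J j0, of "\<lambda>_. q a"] by simp
  next
    case False
    then show ?thesis using sum_hit_none[OF False, of "\<lambda>_. q a"] by simp
  qed
  have pj: "(\<Sum>a\<in>cfg K. if hit b a j then q a else 0) = \<mu> * (1 - \<mu>) ^ (j - 1)" if "j \<in> J" for j
    unfolding q_def using that JK by (intro hit_prob[OF par]) auto
  have tot: "(\<Sum>a\<in>cfg K. q a) = 1" unfolding q_def by (rule total_qw[OF par])
  have n0: "(\<Sum>a\<in>cfg K. if \<exists>j\<in>J. hit b a j then 0 else q a) = 1 - (\<Sum>j\<in>J. \<mu> * (1 - \<mu>) ^ (j - 1))"
  proof -
    have "1 = (\<Sum>a\<in>cfg K. (if \<exists>j\<in>J. hit b a j then 0 else q a) + (\<Sum>j\<in>J. if hit b a j then q a else 0))"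
      unfolding tot[symmetric] by (rule sum.cong[OF refl pw2])
    also have "\<dots> = (\<Sum>a\<in>cfg K. if \<exists>j\<in>J. hit b a j then 0 else q a) + (\<Sum>j\<in>J. \<mu> * (1 - \<mu>) ^ (j - 1))"
      by (simp add: sum.distrib) (subst sum.swap, simp add: pj)
    finally show ?thesis by simp
  qed
  have "(\<Sum>a\<in>cfg K. q a * (if \<forall>j\<in>J. (if j \<in> J \<and> hit b a j then 1 else 0) \<le> m j
            then F (\<lambda>j. m j - (if j \<in> J \<and> hit b a j then 1 else 0)) else 0))
     = (\<Sum>a\<in>cfg K. (if \<exists>j\<in>J. hit b a j then 0 else q a) * F m + (\<Sum>j\<in>J. (if hit b a j then q a else 0) * G j))"
    by (rule sum.cong[OF refl], rule pw)
  also have "\<dots> = (\<Sum>a\<in>cfg K. if \<exists>j\<in>J. hit b a j then 0 else q a) * F m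
       + (\<Sum>j\<in>J. (\<Sum>a\<in>cfg K. if hit b a j then q a else 0) * G j)"
    by (simp add: sum.distrib sum_distrib_right) (subst sum.swap, simp)
  also have "\<dots> = (1 - (\<Sum>j\<in>J. \<mu> * (1 - \<mu>) ^ (j - 1))) * F m + (\<Sum>j\<in>J. \<mu> * (1 - \<mu>) ^ (j - 1) * G j)"
    using pj n0 by simp
  finally show ?thesis unfolding q_def G_def .
qed



definition Pm :: "real \<Rightarrow> (nat \<Rightarrow> nat) \<Rightarrow> nat \<Rightarrow> nat set \<Rightarrow> ('s \<Rightarrow> nucleotide) \<Rightarrow> 's set \<Rightarrow> (nat \<Rightarrow> nat) \<Rightarrow> real" where
  "Pm \<mu> par K J u S m = (\<Sum>G\<in>PiE S (\<lambda>_. cfg K).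
     (if \<forall>j\<in>J. card {i\<in>S. hit (u i) (G i) j} = m j then 1 else 0) * (\<Prod>i\<in>S. qw \<mu> par K (u i) (G i)))"

lemma Pm_eq:
  assumes par: "\<And>j. 1 \<le> j \<Longrightarrow> par j < j" and JK: "J \<subseteq> {1..K}" and S: "finite S"
  shows "Pm \<mu> par K J u S m = Qf (\<lambda>j. \<mu> * (1 - \<mu>) ^ (j - 1)) (1 - (\<Sum>j\<in>J. \<mu> * (1 - \<mu>) ^ (j - 1))) J (card S) m"
  using S
proof (induction S arbitrary: m rule: finite_induct)
  case empty
  have J: "finite J" using JK finite_subset by blast
  show ?case
  proof (cases "\<forall>j\<in>J. m j = 0")
    case True
    then show ?thesis unfolding Pm_def Qf_def using J by auto
  next
    case False
    then have "(\<Sum>j\<in>J. m j) \<noteq> 0" using J by auto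
    then have "ff 0 (\<Sum>j\<in>J. m j) = 0" by (intro ff_zero) auto
    then show ?thesis unfolding Pm_def Qf_def using False by auto
  qed
next
  case (insert i S)
  have J: "finite J" using JK finite_subset by blast
  define p where "p j = \<mu> * (1 - \<mu>) ^ (j - 1)" for j
  define r0 where "r0 = 1 - (\<Sum>j\<in>J. p j)"
  define h where "h a j = (if j \<in> J \<and> hit (u i) a j then 1 else (0::nat))" for a j
  have trm: "(if \<forall>j\<in>J. card {i'\<in>insert i S. hit (u i') ((G(i:=a)) i') j} = m j then 1 else 0)
        * (\<Prod>i'\<in>insert i S. qw \<mu> par K (u i') ((G(i:=a)) i'))
     = qw \<mu> par K (u i) a * ((if \<forall>j\<in>J. h a j \<le> m j then
          (if \<forall>j\<in>J. card {i'\<in>S. hit (u i') (G i') j} = m j - h a j then 1 else 0) else 0)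
        * (\<Prod>i'\<in>S. qw \<mu> par K (u i') (G i')))" for G a
  proof -
    have pr: "(\<Prod>i'\<in>insert i S. qw \<mu> par K (u i') ((G(i:=a)) i')) = qw \<mu> par K (u i) a * (\<Prod>i'\<in>S. qw \<mu> par K (u i') (G i'))"
    proof -
      have "(\<Prod>i'\<in>S. qw \<mu> par K (u i') ((G(i:=a)) i')) = (\<Prod>i'\<in>S. qw \<mu> par K (u i') (G i'))"
        using insert.hyps by (intro prod.cong) auto
      then show ?thesis using insert.hyps by simp
    qed
    have cd: "card {i'\<in>insert i S. hit (u i') ((G(i:=a)) i') j} = card {i'\<in>S. hit (u i') (G i') j} + (if hit (u i) a j then 1 else 0)" for j
    proof -
      have e: "{i'\<in>S. hit (u i') ((G(i:=a)) i') j} = {i'\<in>S. hit (u i') (G i') j}" using insert by auto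
      show ?thesis
      proof (cases "hit (u i) a j")
        case True
        then have "{i'\<in>insert i S. hit (u i') ((G(i:=a)) i') j} = insert i {i'\<in>S. hit (u i') (G i') j}"
          using e by auto
        then show ?thesis using True insert by simp
      next
        case False
        then have "{i'\<in>insert i S. hit (u i') ((G(i:=a)) i') j} = {i'\<in>S. hit (u i') (G i') j}"
          using e insert.hyps by auto
        then show ?thesis using False by simp
      qed
    qed
    have "(\<forall>j\<in>J. card {i'\<in>insert i S. hit (u i') ((G(i:=a)) i') j} = m j) \<longleftrightarrow>
       (\<forall>j\<in>J. h a j \<le> m j) \<and> (\<forall>j\<in>J. card {i'\<in>S. hit (u i') (G i') j} = m j - h a j)"
      unfolding cd h_def by auto
    then show ?thesis unfolding pr by auto
  qed
  have "Pm \<mu> par K J u (insert i S) m = (\<Sum>a\<in>cfg K. \<Sum>G\<in>PiE S (\<lambda>_. cfg K).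
      (if \<forall>j\<in>J. card {i'\<in>insert i S. hit (u i') ((G(i:=a)) i') j} = m j then 1 else 0)
        * (\<Prod>i'\<in>insert i S. qw \<mu> par K (u i') ((G(i:=a)) i')))"
    unfolding Pm_def by (rule sum_PiE_insert) (rule insert.hyps)
  also have "\<dots> = (\<Sum>a\<in>cfg K. qw \<mu> par K (u i) a * (if \<forall>j\<in>J. h a j \<le> m j then Pm \<mu> par K J u S (\<lambda>j. m j - h a j) else 0))"
    unfolding trm Pm_def
  proof (intro sum.cong refl)
    fix a
    show "(\<Sum>G\<in>PiE S (\<lambda>_. cfg K). qw \<mu> par K (u i) a * ((if \<forall>j\<in>J. h a j \<le> m j then
          (if \<forall>j\<in>J. card {i'\<in>S. hit (u i') (G i') j} = m j - h a j then 1 else 0) else 0)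
        * (\<Prod>i'\<in>S. qw \<mu> par K (u i') (G i')))) =
      qw \<mu> par K (u i) a * (if \<forall>j\<in>J. h a j \<le> m j then (\<Sum>G\<in>PiE S (\<lambda>_. cfg K).
     (if \<forall>j\<in>J. card {i\<in>S. hit (u i) (G i) j} = m j - h a j then 1 else 0) * (\<Prod>i\<in>S. qw \<mu> par K (u i) (G i))) else 0)"
    proof (cases "\<forall>j\<in>J. h a j \<le> m j")
      case True
      then show ?thesis by (simp add: sum_distrib_left)
    next
      case False
      then show ?thesis by (simp only: if_False mult_zero_left mult_zero_right sum.neutral_const)
    qed
  qed
  also have "\<dots> = r0 * Pm \<mu> par K J u S m + (\<Sum>j\<in>J. p j * (if 1 \<le> m j then Pm \<mu> par K J u S (m(j := m j - 1)) else 0))"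
    unfolding h_def r0_def p_def by (rule site_step[OF par JK])
  also have "\<dots> = Qf p r0 J (Suc (card S)) m"
    unfolding insert.IH p_def[symmetric] r0_def[symmetric] by (rule qf_step[OF J])
  finally show ?case using insert unfolding p_def r0_def by simp
qed



lemma one_minus_pow_limit:
  fixes s :: "nat \<Rightarrow> real" and N :: "nat \<Rightarrow> nat"
  assumes s0: "s \<longlonglongrightarrow> 0" and Ns: "(\<lambda>n. real (N n) * s n) \<longlonglongrightarrow> c" and pos: "\<And>n. 0 \<le> s n"
  shows "(\<lambda>n. (1 - s n) ^ N n) \<longlonglongrightarrow> exp (- c)"
proof -
  have ev: "eventually (\<lambda>n. s n \<le> 1/2) sequentially"
    using s0 unfolding tendsto_iff dist_real_def
    by (auto elim!: allE[of _ "1/2"] elim: eventually_mono)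
  have eq: "eventually (\<lambda>n. (1 - s n) ^ N n = exp (real (N n) * ln (1 - s n))) sequentially"
    using ev
  proof (rule eventually_mono)
    fix n assume "s n \<le> 1/2"
    then have "0 < 1 - s n" by simp
    then show "(1 - s n) ^ N n = exp (real (N n) * ln (1 - s n))"
      by (simp add: ln_realpow[symmetric])
  qed
  have up: "eventually (\<lambda>n. real (N n) * ln (1 - s n) \<le> - (real (N n) * s n)) sequentially"
    using ev
  proof (rule eventually_mono)
    fix n assume "s n \<le> 1/2"
    then have "ln (1 - s n) \<le> - s n" using ln_le_minus_one[of "1 - s n"] by simp
    then show "real (N n) * ln (1 - s n) \<le> - (real (N n) * s n)"
      using mult_left_mono[of "ln (1 - s n)" "- s n" "real (N n)"] by simp
  qed
  have lo: "eventually (\<lambda>n. - (real (N n) * s n) - 2 * ((real (N n) * s n) * s n) \<le> real (N n) * ln (1 - s n)) sequentially"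
    using ev
  proof (rule eventually_mono)
    fix n assume "s n \<le> 1/2"
    then have "- s n - 2 * (s n)\<^sup>2 \<le> ln (1 - s n)" using ln_one_minus_pos_lower_bound[OF pos] by simp
    then have "real (N n) * (- s n - 2 * (s n)\<^sup>2) \<le> real (N n) * ln (1 - s n)"
      by (intro mult_left_mono) auto
    then show "- (real (N n) * s n) - 2 * ((real (N n) * s n) * s n) \<le> real (N n) * ln (1 - s n)"
      by (simp add: algebra_simps power2_eq_square)
  qed
  have l1: "(\<lambda>n. - (real (N n) * s n) - 2 * ((real (N n) * s n) * s n)) \<longlonglongrightarrow> - c - 2 * (c * 0)"
    by (intro tendsto_intros Ns s0)
  have l2: "(\<lambda>n. - (real (N n) * s n)) \<longlonglongrightarrow> - c"
    by (intro tendsto_intros Ns)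
  have "(\<lambda>n. real (N n) * ln (1 - s n)) \<longlonglongrightarrow> - c"
    using tendsto_sandwich[OF lo up] l1 l2 by simp
  then have "(\<lambda>n. exp (real (N n) * ln (1 - s n))) \<longlonglongrightarrow> exp (- c)"
    by (rule tendsto_exp)
  then show ?thesis using tendsto_cong[OF eq] by simp
qed

lemma Qf_limit:
  fixes \<mu> :: "nat \<Rightarrow> real" and N :: "nat \<Rightarrow> nat" and m :: "nat \<Rightarrow> nat"
  assumes \<mu>0: "\<mu> \<longlonglongrightarrow> 0" and N\<mu>: "(\<lambda>n. real (N n) * \<mu> n) \<longlonglongrightarrow> \<eta>" and J: "finite J"
    and pos: "\<And>n. 0 < \<mu> n \<and> \<mu> n \<le> 1"
  shows "(\<lambda>n. Qf (\<lambda>j. \<mu> n * (1 - \<mu> n) ^ (j - 1)) (1 - (\<Sum>j\<in>J. \<mu> n * (1 - \<mu> n) ^ (j - 1))) J (N n) m)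
     \<longlonglongrightarrow> (\<Prod>j\<in>J. poisson_prob \<eta> (m j))"
proof -
  define M where "M = (\<Sum>j\<in>J. m j)"
  define D where "D = (\<Prod>j\<in>J. fact (m j) :: real)"
  define s where "s n = (\<Sum>j\<in>J. \<mu> n * (1 - \<mu> n) ^ (j - 1))" for n
  define A where "A n = (\<Prod>t<M. (real (N n) * \<mu> n - real t * \<mu> n))" for n
  define B where "B n = (\<Prod>j\<in>J. (1 - \<mu> n) ^ ((j - 1) * m j))" for n
  have s_nonneg: "0 \<le> s n" for n unfolding s_def using pos[of n] by (intro sum_nonneg) auto
  have s0: "s \<longlonglongrightarrow> 0"
  proof -
    have "s \<longlonglongrightarrow> (\<Sum>j\<in>J. 0 * (1 - 0) ^ (j - 1))"
      unfolding s_def by (intro tendsto_intros \<mu>0)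
    then show ?thesis by simp
  qed
  have Ns: "(\<lambda>n. real (N n) * s n) \<longlonglongrightarrow> (\<Sum>j\<in>J. \<eta> * (1 - 0) ^ (j - 1))"
  proof -
    have "(\<lambda>n. real (N n) * s n) = (\<lambda>n. \<Sum>j\<in>J. (real (N n) * \<mu> n) * (1 - \<mu> n) ^ (j - 1))"
      unfolding s_def by (simp add: sum_distrib_left mult.assoc)
    also have "\<dots> \<longlonglongrightarrow> (\<Sum>j\<in>J. \<eta> * (1 - 0) ^ (j - 1))"
      by (intro tendsto_intros \<mu>0 N\<mu>)
    finally show ?thesis .
  qed
  have Ns': "(\<lambda>n. real (N n) * s n) \<longlonglongrightarrow> real (card J) * \<eta>" using Ns by simp
  have R: "(\<lambda>n. (1 - s n) ^ N n) \<longlonglongrightarrow> exp (- (real (card J) * \<eta>))"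
    by (rule one_minus_pow_limit[OF s0 Ns' s_nonneg])
  have RM: "(\<lambda>n. (1 - s n) ^ M) \<longlonglongrightarrow> (1 - 0) ^ M" by (intro tendsto_intros s0)
  have Al: "A \<longlonglongrightarrow> (\<Prod>t<M. (\<eta> - real t * 0))" unfolding A_def by (intro tendsto_intros N\<mu> \<mu>0)
  have Bl: "B \<longlonglongrightarrow> (\<Prod>j\<in>J. (1 - 0) ^ ((j - 1) * m j))" unfolding B_def by (intro tendsto_intros \<mu>0)
  have lim: "(\<lambda>n. A n / D * B n * ((1 - s n) ^ N n / (1 - s n) ^ M)) \<longlonglongrightarrow>
       (\<Prod>t<M. (\<eta> - real t * 0)) / D * (\<Prod>j\<in>J. (1 - 0) ^ ((j - 1) * m j)) * (exp (- (real (card J) * \<eta>)) / (1 - 0) ^ M)"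
  proof -
    have "D \<noteq> 0" unfolding D_def using J by (simp add: prod_zero_iff)
    then show ?thesis by (intro tendsto_intros Al Bl R RM s0) simp_all
  qed
  have target: "(\<Prod>t<M. (\<eta> - real t * 0)) / D * (\<Prod>j\<in>J. (1 - 0) ^ ((j - 1) * m j)) * (exp (- (real (card J) * \<eta>)) / (1 - 0) ^ M)
      = (\<Prod>j\<in>J. poisson_prob \<eta> (m j))"
  proof -
    have "(\<Prod>j\<in>J. poisson_prob \<eta> (m j)) = (\<Prod>j\<in>J. exp (- \<eta>)) * (\<Prod>j\<in>J. \<eta> ^ m j) / D"
      unfolding poisson_prob_def D_def by (simp add: prod.distrib prod_dividef)
    also have "(\<Prod>j\<in>J. exp (- \<eta>)) = exp (- (real (card J) * \<eta>))"
      by (simp add: exp_of_nat_mult[symmetric])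
    also have "(\<Prod>j\<in>J. \<eta> ^ m j) = \<eta> ^ M" unfolding M_def by (simp add: power_sum)
    finally show ?thesis by simp
  qed
  have ev: "eventually (\<lambda>n. s n < 1) sequentially"
    using s0 unfolding tendsto_iff dist_real_def by (auto elim!: allE[of _ 1] elim: eventually_mono)
  have eq: "eventually (\<lambda>n. A n / D * B n * ((1 - s n) ^ N n / (1 - s n) ^ M) =
      Qf (\<lambda>j. \<mu> n * (1 - \<mu> n) ^ (j - 1)) (1 - (\<Sum>j\<in>J. \<mu> n * (1 - \<mu> n) ^ (j - 1))) J (N n) m) sequentially"
    using ev
  proof (rule eventually_mono)
    fix n assume sn: "s n < 1"
    have AA: "A n = ff (N n) M * \<mu> n ^ M"
      unfolding A_def ff_def by (simp add: prod.distrib left_diff_distrib[symmetric])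
    have PP: "(\<Prod>j\<in>J. (\<mu> n * (1 - \<mu> n) ^ (j - 1)) ^ m j) = \<mu> n ^ M * B n"
      unfolding B_def M_def by (simp add: power_mult_distrib prod.distrib power_sum power_mult)
    show "A n / D * B n * ((1 - s n) ^ N n / (1 - s n) ^ M) =
      Qf (\<lambda>j. \<mu> n * (1 - \<mu> n) ^ (j - 1)) (1 - (\<Sum>j\<in>J. \<mu> n * (1 - \<mu> n) ^ (j - 1))) J (N n) m"
    proof (cases "M \<le> N n")
      case True
      have "(1 - s n) ^ (N n - M) = (1 - s n) ^ N n / (1 - s n) ^ M"
        using sn True by (simp add: power_diff)
      then show ?thesis unfolding Qf_def M_def[symmetric] D_def[symmetric] PP s_def[symmetric] AA
        by simp
    next
      case False
      then have "ff (N n) M = 0" by (intro ff_zero) simp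
      then show ?thesis unfolding Qf_def M_def[symmetric] D_def[symmetric] PP s_def[symmetric] AA
        by simp
    qed
  qed
  show ?thesis using tendsto_cong[OF eq] lim unfolding target by simp
qed



lemma adm_facts:
  assumes "admissible_enum e"
  shows "inj e" "surj e" "e 0 = []" "\<And>j. 1 \<le> j \<Longrightarrow> inv e (butlast (e j)) < j"
    "\<And>j. e (inv e j) = j" "\<And>j. inv e (e j) = j"
proof -
  have b: "bij e" and o: "\<And>j k. strict_prefix (e j) (e k) \<Longrightarrow> j < k"
    using assms unfolding admissible_enum_def by auto
  show i: "inj e" and s: "surj e" using b by (auto simp: bij_def)
  show ei: "\<And>j. e (inv e j) = j" using s by (simp add: surj_f_inv_f)
  show ie: "\<And>j. inv e (e j) = j" using i by simp
  show e0: "e 0 = []"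
  proof (rule ccontr)
    assume "e 0 \<noteq> []"
    then have "strict_prefix (e (inv e [])) (e 0)" using ei by (simp add: strict_prefix_def)
    then show False using o by fastforce
  qed
  fix j :: nat assume "1 \<le> j"
  then have "e j \<noteq> []" using e0 i by (metis inj_eq not_one_le_zero)
  then have "strict_prefix (butlast (e j)) (e j)"
    by (metis prefixeq_butlast strict_prefix_def append_butlast_last_id append_self_conv not_Cons_self2)
  then have "strict_prefix (e (inv e (butlast (e j)))) (e j)" using ei by simp
  then show "inv e (butlast (e j)) < j" using o by blast
qed

lemma prod_indicator_real:
  assumes "finite S"
  shows "(if \<forall>i\<in>S. P i then 1 else 0) = (\<Prod>i\<in>S. if P i then 1 else (0::real))"
proof (cases "\<forall>i\<in>S. P i")
  case True then show ?thesis by simp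
next
  case False
  then obtain i where "i \<in> S" "\<not> P i" by blast
  then show ?thesis using assms by (simp add: prod_zero_iff)
qed

lemma measure_event:
  fixes Mm :: "'w measure" and V :: "bool list \<Rightarrow> 'w \<Rightarrow> 's \<Rightarrow> nucleotide"
  assumes gp: "genome_process Mm \<mu> S u V" and adm: "admissible_enum e" and finS: "finite S"
    and XK: "inv e ` X \<subseteq> {..K}"
  shows "measure Mm {\<omega>\<in>space Mm. \<forall>x\<in>X. mut_count e S V u x \<omega> = m x}
       = Pm \<mu> (\<lambda>j. inv e (butlast (e j))) K (inv e ` X) u S (\<lambda>j. m (e j))"
proof -
  note af = adm_facts[OF adm]
  interpret prob_space Mm using gp unfolding genome_process_def by auto
  have meas: "\<And>x i. i \<in> S \<Longrightarrow> (\<lambda>\<omega>. V x \<omega> i) \<in> measurable Mm (count_space UNIV)"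
    using gp unfolding genome_process_def by auto
  have form: "\<And>F w. finite F \<Longrightarrow> [] \<in> F \<Longrightarrow> prefix_closed F \<Longrightarrow>
     measure Mm {\<omega>\<in>space Mm. \<forall>x\<in>F. \<forall>i\<in>S. V x \<omega> i = w x i} =
      (if \<forall>i\<in>S. w [] i = u i then 1 else 0) * (\<Prod>x\<in>F - {[]}. \<Prod>i\<in>S. trans_prob \<mu> (w (butlast x) i) (w x i))"
    using gp unfolding genome_process_def by blast
  define par where "par j = inv e (butlast (e j))" for j
  define F where "F = e ` {..K}"
  define PS where "PS = PiE S (\<lambda>_. cfg K)"
  define Cy where "Cy G = {\<omega>\<in>space Mm. \<forall>i\<in>S. \<forall>j\<in>{..K}. V (e j) \<omega> i = G i j}" for G
  define J where "J = inv e ` X"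
  define good where "good G \<longleftrightarrow> (\<forall>j\<in>J. card {i\<in>S. hit (u i) (G i) j} = m (e j))" for G
  have finPS: "finite PS" unfolding PS_def using finS by (intro finite_PiE) auto
  have Fprops: "finite F" "[] \<in> F" "prefix_closed F"
  proof -
    show "finite F" unfolding F_def by simp
    show "[] \<in> F" unfolding F_def using af(3) by force
    show "prefix_closed F" unfolding prefix_closed_def F_def
    proof (intro ballI allI impI)
      fix x y assume xF: "x \<in> e ` {..K}" and py: "prefix y x"
      then obtain j where j: "j \<le> K" "x = e j" by auto
      show "y \<in> e ` {..K}"
      proof (cases "y = x")
        case True then show ?thesis using xF by simp
      next
        case False
        then have "strict_prefix (e (inv e y)) (e j)" using py j af(5) by (simp add: strict_prefix_def)
        then have "inv e y < j" using adm unfolding admissible_enum_def by blast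
        then have "inv e y \<in> {..K}" using j by simp
        then have "e (inv e y) \<in> e ` {..K}" by (rule imageI)
        then show ?thesis using af(5) by simp
      qed
    qed
  qed
  have CyF: "Cy G = {\<omega>\<in>space Mm. \<forall>x\<in>F. \<forall>i\<in>S. V x \<omega> i = G i (inv e x)}" for G
    unfolding Cy_def F_def using af(6) by auto
  have Fm: "F - {[]} = e ` {1..K}"
  proof -
    have "F - {[]} = e ` {..K} - e ` {0}" unfolding F_def using af(3) by simp
    also have "\<dots> = e ` ({..K} - {0})" by (rule image_set_diff[OF af(1), symmetric])
    also have "{..K} - {0} = {1..K}" by auto
    finally show ?thesis .
  qed
  have inv0: "inv e [] = 0" using af(6)[of 0] af(3) by simp
  have mCy: "measure Mm (Cy G) = (\<Prod>i\<in>S. qw \<mu> par K (u i) (G i))" for G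
  proof -
    have "measure Mm (Cy G) = (if \<forall>i\<in>S. G i (inv e []) = u i then 1 else 0) *
        (\<Prod>x\<in>F - {[]}. \<Prod>i\<in>S. trans_prob \<mu> (G i (inv e (butlast x))) (G i (inv e x)))"
      unfolding CyF by (rule form[OF Fprops])
    also have "(\<Prod>x\<in>F - {[]}. \<Prod>i\<in>S. trans_prob \<mu> (G i (inv e (butlast x))) (G i (inv e x)))
        = (\<Prod>j\<in>{1..K}. \<Prod>i\<in>S. trans_prob \<mu> (G i (par j)) (G i j))"
      unfolding Fm par_def using af(1) by (simp add: prod.reindex inj_on_def af(6))
    also have "\<dots> = (\<Prod>i\<in>S. wt \<mu> par K (G i))"
      unfolding wt_def by (rule prod.swap)
    also have "(if \<forall>i\<in>S. G i (inv e []) = u i then 1 else 0) = (\<Prod>i\<in>S. if G i 0 = u i then 1 else (0::real))"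
      unfolding inv0 by (rule prod_indicator_real[OF finS])
    finally show ?thesis unfolding qw_def by (simp add: prod.distrib)
  qed
  have setsCy: "Cy G \<in> sets Mm" for G
  proof -
    have "Measurable.pred Mm (\<lambda>\<omega>. \<forall>i\<in>S. \<forall>j\<in>{..K}. V (e j) \<omega> i = G i j)"
    proof (rule pred_intros_finite(3)[OF finS])
      fix i assume i: "i \<in> S"
      show "Measurable.pred Mm (\<lambda>\<omega>. \<forall>j\<in>{..K}. V (e j) \<omega> i = G i j)"
        by (rule pred_intros_finite(3)) (auto intro!: pred_count_space_const1 meas i)
    qed
    then show ?thesis unfolding Cy_def pred_def .
  qed
  have fm: "first_mut e V u i x \<omega> \<longleftrightarrow> hit (u i) (G i) (inv e x)"
    if "x \<in> X" "i \<in> S" "\<omega> \<in> Cy G" for x i \<omega> G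
  proof -
    have k0: "inv e x \<le> K" using XK that(1) by auto
    have V: "\<And>j. j \<le> K \<Longrightarrow> V (e j) \<omega> i = G i j" using that(2,3) unfolding Cy_def by auto
    have "first_mut e V u i x \<omega> \<longleftrightarrow> V (e (inv e x)) \<omega> i \<noteq> u i \<and> (\<forall>j<inv e x. V (e j) \<omega> i = u i)"
      unfolding first_mut_def using af(5,6) by metis
    also have "\<dots> \<longleftrightarrow> hit (u i) (G i) (inv e x)"
      unfolding hit_def using V k0 by (auto)
    finally show ?thesis .
  qed
  have key: "(\<forall>x\<in>X. mut_count e S V u x \<omega> = m x) \<longleftrightarrow> good G" if "\<omega> \<in> Cy G" for \<omega> G
  proof -
    have "mut_count e S V u x \<omega> = card {i\<in>S. hit (u i) (G i) (inv e x)}" if "x \<in> X" for x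
      unfolding mut_count_def using fm[OF that _ \<open>\<omega> \<in> Cy G\<close>] by (metis (lifting))
    then show ?thesis unfolding good_def J_def using af(5) by auto
  qed
  have Eeq: "{\<omega>\<in>space Mm. \<forall>x\<in>X. mut_count e S V u x \<omega> = m x} = (\<Union>G\<in>{G\<in>PS. good G}. Cy G)"
  proof (intro equalityI subsetI)
    fix \<omega> assume \<omega>: "\<omega> \<in> {\<omega>\<in>space Mm. \<forall>x\<in>X. mut_count e S V u x \<omega> = m x}"
    define G0 where "G0 = restrict (\<lambda>i. restrict (\<lambda>j. V (e j) \<omega> i) {..K}) S"
    have "G0 \<in> PS" unfolding G0_def PS_def cfg_def by auto
    moreover have "\<omega> \<in> Cy G0" using \<omega> unfolding G0_def Cy_def by auto
    moreover then have "good G0" using key \<omega> by blast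
    ultimately show "\<omega> \<in> (\<Union>G\<in>{G\<in>PS. good G}. Cy G)" by blast
  next
    fix \<omega> assume "\<omega> \<in> (\<Union>G\<in>{G\<in>PS. good G}. Cy G)"
    then obtain G where "good G" "\<omega> \<in> Cy G" by blast
    then show "\<omega> \<in> {\<omega>\<in>space Mm. \<forall>x\<in>X. mut_count e S V u x \<omega> = m x}"
      using key unfolding Cy_def by blast
  qed
  have disj: "disjoint_family_on Cy {G\<in>PS. good G}"
    unfolding disjoint_family_on_def
  proof (intro ballI impI)
    fix G G' assume G: "G \<in> {G\<in>PS. good G}" and G': "G' \<in> {G\<in>PS. good G}" and ne: "G \<noteq> G'"
    have "\<exists>i\<in>S. \<exists>j\<le>K. G i j \<noteq> G' i j"
    proof (rule ccontr)
      assume "\<not> ?thesis"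
      then have "\<forall>i\<in>S. G i = G' i"
        using G G' unfolding PS_def cfg_def by (auto intro!: PiE_ext[of _ "{..K}" "\<lambda>_. UNIV"])
      then have "G = G'" using G G' unfolding PS_def by (auto intro: PiE_ext)
      then show False using ne by simp
    qed
    then show "Cy G \<inter> Cy G' = {}" unfolding Cy_def by fastforce
  qed
  have "measure Mm {\<omega>\<in>space Mm. \<forall>x\<in>X. mut_count e S V u x \<omega> = m x} = (\<Sum>G\<in>{G\<in>PS. good G}. measure Mm (Cy G))"
    unfolding Eeq by (rule finite_measure_finite_Union) (use finPS setsCy disj in auto)
  also have "\<dots> = (\<Sum>G\<in>PS. if good G then (\<Prod>i\<in>S. qw \<mu> par K (u i) (G i)) else 0)"
    by (simp add: sum.inter_filter[OF finPS] mCy)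
  also have "\<dots> = Pm \<mu> par K J u S (\<lambda>j. m (e j))"
    unfolding Pm_def PS_def good_def by (intro sum.cong refl) simp
  finally show ?thesis unfolding par_def J_def .
qed



theorem mainTheorem12:
  fixes e :: "nat \<Rightarrow> bool list"
    and \<mu> :: "nat \<Rightarrow> real" and \<eta> :: real
    and S :: "nat \<Rightarrow> 's set" and u :: "nat \<Rightarrow> 's \<Rightarrow> nucleotide"
    and M :: "nat \<Rightarrow> 'w measure"
    and V :: "nat \<Rightarrow> bool list \<Rightarrow> 'w \<Rightarrow> 's \<Rightarrow> nucleotide"
  assumes "admissible_enum e"
    and "\<And>n. 0 < \<mu> n \<and> \<mu> n \<le> 1"
    and "\<And>n. finite (S n)"
    and "\<And>n. genome_process (M n) (\<mu> n) (S n) (u n) (V n)"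
    and "\<mu> \<longlonglongrightarrow> 0"
    and "(\<lambda>n. real (card (S n)) * \<mu> n) \<longlonglongrightarrow> \<eta>"
    and "0 \<le> \<eta>"
  shows "\<And>X m. finite X \<Longrightarrow> [] \<notin> X \<Longrightarrow>
     (\<lambda>n. measure (M n) {\<omega>\<in>space (M n). \<forall>x\<in>X. mut_count e (S n) (V n) (u n) x \<omega> = m x})
       \<longlonglongrightarrow> (\<Prod>x\<in>X. poisson_prob \<eta> (m x))"
proof -
  fix X :: "bool list set" and m :: "bool list \<Rightarrow> nat"
  assume X: "finite X" "[] \<notin> X"
  note af = adm_facts[OF assms(1)]
  define J where "J = inv e ` X"
  define K where "K = Max (insert 0 J)"
  define par where "par j = inv e (butlast (e j))" for j
  have finJ: "finite J" unfolding J_def using X by simp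
  have XK: "inv e ` X \<subseteq> {..K}" unfolding K_def J_def[symmetric] using finJ by auto
  have JK: "J \<subseteq> {1..K}"
  proof
    fix j assume j: "j \<in> J"
    then obtain x where x: "x \<in> X" "j = inv e x" unfolding J_def by auto
    have "j \<noteq> 0" using x X(2) af(5)[of x] af(3) by (metis)
    moreover have "j \<le> K" using XK j unfolding J_def by auto
    ultimately show "j \<in> {1..K}" by simp
  qed
  have parlt: "\<And>j. 1 \<le> j \<Longrightarrow> par j < j" unfolding par_def by (rule af(4))
  have eq: "measure (M n) {\<omega>\<in>space (M n). \<forall>x\<in>X. mut_count e (S n) (V n) (u n) x \<omega> = m x}
     = Qf (\<lambda>j. \<mu> n * (1 - \<mu> n) ^ (j - 1)) (1 - (\<Sum>j\<in>J. \<mu> n * (1 - \<mu> n) ^ (j - 1))) J (card (S n)) (\<lambda>j. m (e j))" for n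
    unfolding measure_event[OF assms(4) assms(1) assms(3) XK] J_def[symmetric] par_def[symmetric]
    by (rule Pm_eq[OF parlt JK assms(3)])
  have lim: "(\<lambda>n. Qf (\<lambda>j. \<mu> n * (1 - \<mu> n) ^ (j - 1)) (1 - (\<Sum>j\<in>J. \<mu> n * (1 - \<mu> n) ^ (j - 1))) J (card (S n)) (\<lambda>j. m (e j)))
      \<longlonglongrightarrow> (\<Prod>j\<in>J. poisson_prob \<eta> (m (e j)))"
    by (rule Qf_limit[OF assms(5) assms(6) finJ assms(2)])
  have inj: "inj_on (inv e) X"
    by (metis af(5) inj_onI)
  have "(\<Prod>j\<in>J. poisson_prob \<eta> (m (e j))) = (\<Prod>x\<in>X. poisson_prob \<eta> (m x))"
    unfolding J_def by (simp add: prod.reindex[OF inj] af(5))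
  then show "(\<lambda>n. measure (M n) {\<omega>\<in>space (M n). \<forall>x\<in>X. mut_count e (S n) (V n) (u n) x \<omega> = m x})
       \<longlonglongrightarrow> (\<Prod>x\<in>X. poisson_prob \<eta> (m x))"
    using lim unfolding eq by simp
qed


end
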